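(* Let $Q$ be a finite inverse semigroup. Then every left I-order in $Q$ is straight.
   Context: For an element $a$ of an inverse semigroup $Q$, $a^{-1}$ is its unique inverse. A subsemigroup $S$ of $Q$ is a left I-order in $Q$ if every $q\in Q$ can be written $q=a^{-1}b$ with $a,b\in S$; it is straight if $a,b$ can always be chosen with $a\,\mathcal{R}\,b$ in $Q$ (Green's relation of $Q$). *)

theory Defs
  imports Main
begin

(* The inverse semigroup Q is modelled as the whole of a type 'a of class semigroup_mult. *)

definition inverse_semigroup :: "'a::semigroup_mult itself \<Rightarrow> bool" where
  "inverse_semigroup _ \<longleftrightarrow> (\<forall>a::'a. \<exists>!b. a * b * a = a \<and> b * a * b = b)"

definition sinv :: "'a::semigroup_mult \<Rightarrow> 'a" where
  "sinv a = (THE b. a * b * a = a \<and> b * a * b = b)"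

(* Green's relation R of Q: a Q^1 = b Q^1 *)
definition green_R :: "'a::semigroup_mult \<Rightarrow> 'a \<Rightarrow> bool" where
  "green_R a b \<longleftrightarrow> insert a (range (\<lambda>x. a * x)) = insert b (range (\<lambda>x. b * x))"

definition subsemigroup :: "'a::semigroup_mult set \<Rightarrow> bool" where
  "subsemigroup S \<longleftrightarrow> (\<forall>a\<in>S. \<forall>b\<in>S. a * b \<in> S)"

definition left_I_order :: "'a::semigroup_mult set \<Rightarrow> bool" where
  "left_I_order S \<longleftrightarrow> subsemigroup S \<and> (\<forall>q. \<exists>a\<in>S. \<exists>b\<in>S. q = sinv a * b)"

definition straight_left_I_order :: "'a::semigroup_mult set \<Rightarrow> bool" where
  "straight_left_I_order S \<longleftrightarrow> left_I_order S \<and>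
     (\<forall>q. \<exists>a\<in>S. \<exists>b\<in>S. q = sinv a * b \<and> green_R a b)"

end

theory Submission
  imports Defs
begin

lemma sinv_prop:
  assumes "inverse_semigroup TYPE('a::semigroup_mult)"
  shows "(a::'a) * sinv a * a = a \<and> sinv a * a * sinv a = sinv a"
proof -
  have "\<exists>!b. a * b * a = a \<and> b * a * b = b" using assms unfolding inverse_semigroup_def by blast
  then show ?thesis unfolding sinv_def by (rule theI')
qed

lemma sinv_unique:
  assumes "inverse_semigroup TYPE('a::semigroup_mult)"
    and "(a::'a) * b * a = a" and "b * a * b = b"
  shows "b = sinv a"
proof -
  have u: "\<exists>!b. a * b * a = a \<and> b * a * b = b" using assms(1) unfolding inverse_semigroup_def by blast
  show ?thesis using u assms(2,3) sinv_prop[OF assms(1), of a] by blast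
qed

lemma idem_sinv:
  assumes "inverse_semigroup TYPE('a::semigroup_mult)" and "(e::'a) * e = e"
  shows "sinv e = e"
  using sinv_unique[OF assms(1), of e e] assms(2) by (simp add: mult.assoc)

lemma sinv_sinv:
  assumes "inverse_semigroup TYPE('a::semigroup_mult)"
  shows "sinv (sinv (a::'a)) = a"
  using sinv_unique[OF assms(1), of "sinv a" a] sinv_prop[OF assms(1), of a] by (simp add: mult.assoc)

lemma idem_comm:
  assumes I: "inverse_semigroup TYPE('a::semigroup_mult)" and e: "(e::'a) * e = e" and f: "f * f = f"
  shows "e * f = f * e"
proof -
  have idem: "x * y * (x * y) = x * y" if x: "(x::'a) * x = x" and y: "y * y = y" for x y
  proof -
    define z where "z = sinv (x * y)"
    have p: "x * y * z * (x * y) = x * y" "z * (x * y) * z = z"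
      using sinv_prop[OF I, of "x*y"] unfolding z_def by auto
    have c1: "x * y * (y * z * x) * (x * y) = x * y"
    proof -
      have "x * y * (y * z * x) * (x * y) = x * (y * y) * z * (x * x) * y"
        by (simp add: mult.assoc)
      also have "\<dots> = x * y * z * (x * y)" using x y by (simp add: mult.assoc)
      finally show ?thesis using p(1) by simp
    qed
    have c2: "y * z * x * (x * y) * (y * z * x) = y * z * x"
    proof -
      have "y * z * x * (x * y) * (y * z * x) = y * (z * (x * x) * (y * y) * z) * x"
        by (simp add: mult.assoc)
      also have "\<dots> = y * (z * (x * y) * z) * x" using x y by (simp add: mult.assoc)
      finally show ?thesis using p(2) by simp
    qed
    have "y * z * x = z"
      using sinv_unique[OF I c1 c2] unfolding z_def by simp
    then have zz: "z * z = z"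
      by (metis mult.assoc p(2))
    then have "sinv z = z" using idem_sinv[OF I] by blast
    then have "x * y = z" using sinv_sinv[OF I, of "x*y"] unfolding z_def by simp
    then show ?thesis using zz by simp
  qed
  have ef: "e * f * (e * f) = e * f" and fe: "f * e * (f * e) = f * e" using idem e f by auto
  have "f * e = sinv (e * f)"
  proof (rule sinv_unique[OF I])
    show "e * f * (f * e) * (e * f) = e * f"
      using ef e f by (metis mult.assoc)
    show "f * e * (e * f) * (f * e) = f * e"
      using fe e f by (metis mult.assoc)
  qed
  then show ?thesis using idem_sinv[OF I ef] by simp
qed


lemma idem_self: 
  assumes I: "inverse_semigroup TYPE('a::semigroup_mult)"
  shows "sinv (a::'a) * a * (sinv a * a) = sinv a * a" "a * sinv a * (a * sinv a) = a * sinv a"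
  using sinv_prop[OF I, of a] by (metis mult.assoc)+

lemma sinv_mult:
  assumes I: "inverse_semigroup TYPE('a::semigroup_mult)"
  shows "sinv ((a::'a) * b) = sinv b * sinv a"
proof -
  have ca: "a * sinv a * a = a" "sinv a * a * sinv a = sinv a" using sinv_prop[OF I, of a] by auto
  have cb: "b * sinv b * b = b" "sinv b * b * sinv b = sinv b" using sinv_prop[OF I, of b] by auto
  have com: "sinv a * a * (b * sinv b) = b * sinv b * (sinv a * a)"
    using idem_comm[OF I idem_self(1)[OF I, of a] idem_self(2)[OF I, of b]] .
  have "a * b * (sinv b * sinv a) * (a * b) = a * (b * sinv b * (sinv a * a)) * b"
    by (simp add: mult.assoc)
  also have "\<dots> = a * (sinv a * a * (b * sinv b)) * b" using com by simp
  also have "\<dots> = (a * sinv a * a) * (b * sinv b * b)" by (simp add: mult.assoc)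
  also have "\<dots> = a * b" using ca cb by simp
  finally have 1: "a * b * (sinv b * sinv a) * (a * b) = a * b" .
  have "sinv b * sinv a * (a * b) * (sinv b * sinv a) = sinv b * (sinv a * a * (b * sinv b)) * sinv a"
    by (simp add: mult.assoc)
  also have "\<dots> = sinv b * (b * sinv b * (sinv a * a)) * sinv a" using com by simp
  also have "\<dots> = (sinv b * b * sinv b) * (sinv a * a * sinv a)" by (simp add: mult.assoc)
  also have "\<dots> = sinv b * sinv a" using ca cb by simp
  finally have 2: "sinv b * sinv a * (a * b) * (sinv b * sinv a) = sinv b * sinv a" .
  show ?thesis using sinv_unique[OF I 1 2] by simp
qed

fun pw :: "'a::semigroup_mult \<Rightarrow> nat \<Rightarrow> 'a" where
  "pw x 0 = x"
| "pw x (Suc n) = x * pw x n"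

lemma pw_add: "pw x (Suc (m + n)) = pw x m * pw x n"
  by (induction m) (auto simp: mult.assoc)

lemma pw_Suc2: "pw x (Suc n) = pw x n * x"
  using pw_add[of x n 0] by simp

lemma pw_period:
  assumes fin: "finite (UNIV :: 'a::semigroup_mult set)"
  shows "\<exists>n. pw (x::'a) n * pw x n = pw x n"
proof -
  have "\<not> inj (pw x)"
  proof
    assume "inj (pw x)"
    then have "infinite (range (pw x))" using finite_imageD by blast
    then show False using fin by (meson finite_subset top_greatest)
  qed
  then obtain i j where ij: "i < j" "pw x i = pw x j"
    unfolding inj_def by (metis linorder_neqE_nat)
  define p where "p = j - i"
  have pp: "p > 0" using ij p_def by simp
  have step: "pw x (m + p) = pw x m" if "m \<ge> i" for m
  proof (cases "m = i")
    case True then show ?thesis using ij p_def by simp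
  next
    case False
    define a where "a = m - Suc i"
    have a: "m = i + Suc a" using that False a_def by simp
    have "pw x (m + p) = pw x (Suc (j + a))" using a p_def ij by (simp add: add.commute)
    also have "\<dots> = pw x j * pw x a" by (rule pw_add)
    also have "\<dots> = pw x i * pw x a" using ij by simp
    also have "\<dots> = pw x m" using a pw_add[of x i a] by simp
    finally show ?thesis .
  qed
  have stepk: "pw x (m + k * p) = pw x m" if "m \<ge> i" for m k
  proof (induction k)
    case 0 then show ?case by simp
  next
    case (Suc k)
    have "pw x (m + Suc k * p) = pw x ((m + k * p) + p)" by (simp add: algebra_simps)
    also have "\<dots> = pw x (m + k * p)" using step that by simp
    finally show ?case using Suc by simp
  qed
  define n where "n = p * Suc i - 1"
  have n1: "Suc n = p * Suc i" using pp n_def by simp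
  have "p * Suc i \<ge> 1 * Suc i" using pp by (intro mult_le_mono1) simp
  then have ni: "n \<ge> i" using n1 by simp
  have "pw x n * pw x n = pw x (Suc (n + n))" by (rule pw_add[symmetric])
  also have "Suc (n + n) = n + Suc i * p" using n1 by simp
  also have "pw x (n + Suc i * p) = pw x n" using stepk ni by blast
  finally show ?thesis by blast
qed

lemma lemL:
  assumes fin: "finite (UNIV :: 'a::semigroup_mult set)"
    and I: "inverse_semigroup TYPE('a)"
    and gg: "(g::'a) * g = g" and hh: "h * h = h" and gh: "g * h = g"
    and hpgr: "h = p * g * r"
  shows "g = h"
proof -
  define u where "u = p * g"
  have hu: "h = u * r" using hpgr u_def by simp
  have hinv: "sinv h = h" using idem_sinv[OF I hh] .
  have ginv: "sinv g = g" using idem_sinv[OF I gg] .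
  have h1: "h = u * r * (sinv r * sinv u)" using hinv hh hu sinv_mult[OF I, of u r] by metis
  have uuh: "u * sinv u * h = h"
  proof -
    have "u * sinv u * h = (u * sinv u * u) * r * (sinv r * sinv u)" using h1 by (metis mult.assoc)
    also have "\<dots> = h" using sinv_prop[OF I, of u] h1 by simp
    finally show ?thesis .
  qed
  define x where "x = h * u"
  have xinv: "sinv x = sinv u * h" using sinv_mult[OF I, of h u] hinv x_def by simp
  have xx: "x * sinv x = h"
  proof -
    have "x * sinv x = h * (u * sinv u * h)" using x_def xinv by (simp add: mult.assoc)
    then show ?thesis using uuh hh by simp
  qed
  have ug: "u * g = u" using u_def gg by (simp add: mult.assoc)
  have uh: "u * h = u" using u_def gh by (simp add: mult.assoc)
  have xg: "sinv x * x * g = sinv x * x" using x_def ug by (simp add: mult.assoc)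
  have xh: "sinv x * x * h = sinv x * x" using x_def uh by (simp add: mult.assoc)
  have xhx: "x * h * sinv x = h"
  proof -
    have "x * h * sinv x = (x * sinv x * x) * h * sinv x" using sinv_prop[OF I, of x] by simp
    also have "\<dots> = x * (sinv x * x * h) * sinv x" by (simp add: mult.assoc)
    also have "\<dots> = (x * sinv x * x) * sinv x" using xh by (simp add: mult.assoc)
    also have "\<dots> = h" using sinv_prop[OF I, of x] xx by simp
    finally show ?thesis .
  qed
  have P: "pw x n * sinv (pw x n) = h" for n
  proof (induction n)
    case 0 then show ?case using xx by simp
  next
    case (Suc n)
    have "pw x (Suc n) * sinv (pw x (Suc n)) = x * (pw x n * sinv (pw x n)) * sinv x"
      using sinv_mult[OF I, of x "pw x n"] by (simp add: mult.assoc)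
    then show ?case using Suc xhx by simp
  qed
  obtain n where n: "pw x n * pw x n = pw x n" using pw_period[OF fin] by blast
  have hn: "h = pw x n" using P[of n] idem_sinv[OF I n] n by simp
  have pwx: "pw x m * (sinv x * x) = pw x m" for m
  proof (cases m)
    case 0 then show ?thesis using sinv_prop[OF I, of x] by (simp add: mult.assoc)
  next
    case (Suc m')
    have "pw x m * (sinv x * x) = pw x m' * (x * sinv x * x)"
      unfolding Suc pw_Suc2 by (simp only: mult.assoc)
    also have "\<dots> = pw x m' * x" using sinv_prop[OF I, of x] by simp
    also have "\<dots> = pw x m" unfolding Suc pw_Suc2 ..
    finally show ?thesis .
  qed
  have hx: "h * (sinv x * x) = h" using hn pwx by simp
  have hg: "h * g = g" using idem_comm[OF I gg hh] gh by simp
  have "h = h * (sinv x * x * g)" using hx xg by simp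
  also have "\<dots> = h * g" using hx by (simp flip: mult.assoc)
  finally show ?thesis using hg by simp
qed

definition Up :: "'a::semigroup_mult \<Rightarrow> 'a set" where
  "Up a = {y. \<exists>p r. a = p * y * r}"

lemma claimC:
  assumes fin: "finite (UNIV :: 'a::semigroup_mult set)"
    and I: "inverse_semigroup TYPE('a)"
    and L: "left_I_order S"
  shows "(g::'a) * g = g \<Longrightarrow> \<exists>x\<in>S. sinv x * x = g"
proof (induction "card (Up g)" arbitrary: g rule: less_induct)
  case less
  have gg: "g * g = g" by fact
  have sub: "subsemigroup S" using L unfolding left_I_order_def by blast
  obtain c d where cd: "c \<in> S" "d \<in> S" "g = sinv c * d" using L unfolding left_I_order_def by blast
  define h where "h = sinv d * d"
  define k where "k = d * sinv d"
  have ginv: "sinv g = g" using idem_sinv[OF I gg] .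
  have g1: "g = sinv d * c" using ginv cd(3) sinv_mult[OF I, of "sinv c" d] sinv_sinv[OF I, of c] by simp
  have g2: "g * g = (sinv d * c) * (sinv c * d)" using g1 cd(3) by (rule arg_cong2[where f="(*)"])
  have gh: "g * h = g"
  proof -
    have "g * h = sinv d * c * (sinv c * (d * sinv d * d))" using g2 gg h_def by (simp add: mult.assoc)
    also have "\<dots> = sinv d * c * (sinv c * d)" using sinv_prop[OF I, of d] by simp
    finally show ?thesis using g2 gg by simp
  qed
  have gk: "g = sinv c * k * c"
  proof -
    have "g = sinv c * d * (sinv d * c)" using gg cd(3) g1 by simp
    then show ?thesis using k_def by (simp add: mult.assoc)
  qed
  have hh: "h * h = h" using idem_self(1)[OF I, of d] h_def by simp
  have kk: "k * k = k" using idem_self(2)[OF I, of d] k_def by simp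
  show ?case
  proof (cases "g = h")
    case True
    then show ?thesis using cd(2) h_def by blast
  next
    case False
    have sub1: "Up k \<subseteq> Up g"
    proof
      fix y assume "y \<in> Up k"
      then obtain p r where "k = p * y * r" unfolding Up_def by blast
      then have "g = (sinv c * p) * y * (r * c)" using gk by (simp add: mult.assoc)
      then show "y \<in> Up g" unfolding Up_def by blast
    qed
    have "g = g * g * g" using gg by simp
    then have "g \<in> Up g" unfolding Up_def by blast
    moreover have "g \<notin> Up k"
    proof
      assume "g \<in> Up k"
      then obtain p r where "k = p * g * r" unfolding Up_def by blast
      moreover have "h = sinv d * k * d"
        using k_def h_def sinv_prop[OF I, of d] by (simp add: mult.assoc)
      ultimately have "h = (sinv d * p) * g * (r * d)" by (simp add: mult.assoc)
      then have "g = h" using lemL[OF fin I gg hh gh] by blast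
      then show False using False by simp
    qed
    ultimately have "Up k \<subset> Up g" using sub1 by blast
    then have "card (Up k) < card (Up g)"
      by (meson fin finite_subset psubset_card_mono top_greatest)
    then obtain x where x: "x \<in> S" "sinv x * x = k" using less kk by blast
    have "x * c \<in> S" using sub x(1) cd(1) unfolding subsemigroup_def by blast
    moreover have "sinv (x * c) * (x * c) = g"
    proof -
      have "sinv (x * c) * (x * c) = sinv c * (sinv x * x) * c"
        using sinv_mult[OF I, of x c] by (simp add: mult.assoc)
      then show ?thesis using x(2) gk by simp
    qed
    ultimately show ?thesis by blast
  qed
qed

lemma greenR_of:
  assumes I: "inverse_semigroup TYPE('a::semigroup_mult)"
    and eq: "(c::'a) * sinv c = d * sinv d"
  shows "green_R c d"
proof -
  have c1: "c = d * (sinv d * c)" using sinv_prop[OF I, of c] eq by (metis mult.assoc)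
  have d1: "d = c * (sinv c * d)" using sinv_prop[OF I, of d] eq by (metis mult.assoc)
  have a: "insert c (range ((*) c)) \<subseteq> insert d (range ((*) d))"
  proof
    fix y assume "y \<in> insert c (range ((*) c))"
    then show "y \<in> insert d (range ((*) d))"
    proof
      assume "y = c" then show ?thesis using c1 by blast
    next
      assume "y \<in> range ((*) c)"
      then obtain z where "y = c * z" by blast
      then have "y = d * (sinv d * c * z)" using c1 by (metis mult.assoc)
      then show ?thesis by blast
    qed
  qed
  have b: "insert d (range ((*) d)) \<subseteq> insert c (range ((*) c))"
  proof
    fix y assume "y \<in> insert d (range ((*) d))"
    then show "y \<in> insert c (range ((*) c))"
    proof
      assume "y = d" then show ?thesis using d1 by blast
    next
      assume "y \<in> range ((*) d)"
      then obtain z where "y = d * z" by blast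
      then have "y = c * (sinv c * d * z)" using d1 by (metis mult.assoc)
      then show ?thesis by blast
    qed
  qed
  show ?thesis unfolding green_R_def using a b by blast
qed

theorem corollary2p5:
  fixes S :: "'a::semigroup_mult set"
  assumes "finite (UNIV :: 'a set)"
    and "inverse_semigroup TYPE('a)"
    and "left_I_order S"
  shows "straight_left_I_order S"
proof -
  note fin = assms(1) and I = assms(2) and L = assms(3)
  have sub: "subsemigroup S" using L unfolding left_I_order_def by blast
  have "\<exists>c\<in>S. \<exists>d\<in>S. q = sinv c * d \<and> green_R c d" for q
  proof -
    obtain a b where ab: "a \<in> S" "b \<in> S" "q = sinv a * b" using L unfolding left_I_order_def by blast
    define e where "e = a * sinv a"
    define f where "f = b * sinv b"
    have ee: "e * e = e" using idem_self(2)[OF I, of a] e_def by simp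
    have ff: "f * f = f" using idem_self(2)[OF I, of b] f_def by simp
    have com: "e * f = f * e" using idem_comm[OF I ee ff] .
    have efe: "e * f * e = e * f" using com ee by (metis mult.assoc)
    have eff: "e * f * f = e * f" using ff by (simp add: mult.assoc)
    have efef: "e * f * (e * f) = e * f" using efe eff by (metis mult.assoc)
    obtain x where x: "x \<in> S" "sinv x * x = e * f" using claimC[OF fin I L efef] by blast
    have c: "x * a \<in> S" and d: "x * b \<in> S" using sub x(1) ab unfolding subsemigroup_def by blast+
    have "sinv (x * a) * (x * b) = sinv a * (sinv x * x) * b"
      using sinv_mult[OF I, of x a] by (simp add: mult.assoc)
    also have "\<dots> = (sinv a * a * sinv a) * (b * sinv b * b)" using x(2) e_def f_def by (simp add: mult.assoc)
    also have "\<dots> = q" using ab(3) sinv_prop[OF I, of a] sinv_prop[OF I, of b] by simp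
    finally have q: "sinv (x * a) * (x * b) = q" .
    have xx: "x * sinv x * x = x" using sinv_prop[OF I, of x] by simp
    have r1: "x * e * sinv x = x * sinv x"
    proof -
      have "x * e * sinv x = x * (sinv x * x * e) * sinv x" using xx by (metis mult.assoc)
      also have "\<dots> = x * (sinv x * x) * sinv x" using x(2) efe by simp
      also have "\<dots> = x * sinv x" using xx by (simp add: mult.assoc)
      finally show ?thesis .
    qed
    have r2: "x * f * sinv x = x * sinv x"
    proof -
      have "x * f * sinv x = x * (sinv x * x * f) * sinv x" using xx by (metis mult.assoc)
      also have "\<dots> = x * (sinv x * x) * sinv x" using x(2) eff by simp
      also have "\<dots> = x * sinv x" using xx by (simp add: mult.assoc)
      finally show ?thesis .
    qed
    have "(x * a) * sinv (x * a) = (x * b) * sinv (x * b)"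
      using sinv_mult[OF I, of x a] sinv_mult[OF I, of x b] r1 r2 e_def f_def
      by (simp add: mult.assoc)
    then have "green_R (x * a) (x * b)" using greenR_of[OF I] by blast
    then show ?thesis using c d q by blast
  qed
  then show ?thesis unfolding straight_left_I_order_def using L by blast
qed

end
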